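(* Let $A \in \mathbb{R}^{n\times n}$ and let $Q, D \in \mathbb{R}^{n\times n}$ be symmetric. Assume that the pair $(A,D)$ is stabilizable and the pair $(Q,A)$ is detectable, and let $P$ be the unique stabilizing solution of the algebraic Riccati equation $A^T X + XA + Q - XDX = 0$. Let $$H = \begin{bmatrix} A & -D \\ -Q & -A^T\end{bmatrix}\in\mathbb{R}^{2n\times 2n},\qquad J=\begin{bmatrix}\mathbf{0}_n & I_n\\ -I_n & \mathbf{0}_n\end{bmatrix},$$ and let $(\lambda_i, v_i)$ be a right eigenpair of $H$ with $\lambda_i<0$ real and $v_i\in\mathbb{R}^{2n}$ a unit vector ($Hv_i=\lambda_i v_i$, $\|v_i\|=1$). Define $p_i = (J + I_{2n}) v_i$ and $q_i = J v_i$. Then for any $\Delta\lambda_i \in \mathbb{R}$ there exist $\tilde A \in \mathbb{R}^{n\times n}$ and symmetric $\tilde Q, \tilde D \in \mathbb{R}^{n\times n}$ such that $$H + \Delta\lambda_i\left(v_i p_i^T - q_i q_i^T\right) = \begin{bmatrix} \tilde A & -\tilde D \\ -\tilde Q & -\tilde A^T\end{bmatrix}.$$ Moreover, if $\Delta\lambda_i < -\lambda_i$, then $P$ is the unique stabilizing solution of $\tilde A^T X + X\tilde A + \tilde Q - X\tilde D X = 0$.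
   Context: A solution $X$ of the algebraic Riccati equation $A^TX+XA+Q-XDX=0$ is called stabilizing if $A - DX$ is Hurwitz (all eigenvalues have negative real part); a stabilizing solution, if it exists, is unique (and symmetric). Under the stabilizability/detectability assumption such a solution exists. A right eigenpair $(\lambda,v)$ of a matrix $M$ means $Mv=\lambda v$ with $v\neq 0$. *)

theory Defs
  imports "HOL-Analysis.Analysis"
begin

text \<open>Real n x n matrices are rendered as real^'n^'n; 2n x 2n matrices are indexed
by the disjoint sum 'n + 'n (first block = Inl, second block = Inr).\<close>

definition cmat :: "real^'n^'m \<Rightarrow> complex^'n^'m" where
  "cmat M = (\<chi> i j. complex_of_real (M $ i $ j))"

definition hurwitz :: "real^'n^'n \<Rightarrow> bool" where
  "hurwitz M \<longleftrightarrow> (\<forall>(l::complex) (v::complex^'n). v \<noteq> 0 \<and> cmat M *v v = l *s v \<longrightarrow> Re l < 0)"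

definition stabilizable :: "real^'n^'n \<Rightarrow> real^'n^'n \<Rightarrow> bool" where
  "stabilizable A D \<longleftrightarrow> (\<exists>K::real^'n^'n. hurwitz (A - D ** K))"

definition detectable :: "real^'n^'n \<Rightarrow> real^'n^'n \<Rightarrow> bool" where
  "detectable Q A \<longleftrightarrow> (\<exists>L::real^'n^'n. hurwitz (A - L ** Q))"

definition symmetric_mat :: "real^'n^'n \<Rightarrow> bool" where
  "symmetric_mat M \<longleftrightarrow> transpose M = M"

definition are_residual :: "real^'n^'n \<Rightarrow> real^'n^'n \<Rightarrow> real^'n^'n \<Rightarrow> real^'n^'n \<Rightarrow> real^'n^'n" where
  "are_residual A Q D X = transpose A ** X + X ** A + Q - X ** D ** X"

definition stabilizing_solution :: "real^'n^'n \<Rightarrow> real^'n^'n \<Rightarrow> real^'n^'n \<Rightarrow> real^'n^'n \<Rightarrow> bool" where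
  "stabilizing_solution A Q D X \<longleftrightarrow> are_residual A Q D X = 0 \<and> hurwitz (A - D ** X)"

definition block_mat :: "real^'n^'n \<Rightarrow> real^'n^'n \<Rightarrow> real^'n^'n \<Rightarrow> real^'n^'n \<Rightarrow> real^('n+'n)^('n+'n)" where
  "block_mat M11 M12 M21 M22 = (\<chi> i j. case i of
      Inl a \<Rightarrow> (case j of Inl b \<Rightarrow> M11 $ a $ b | Inr b \<Rightarrow> M12 $ a $ b)
    | Inr a \<Rightarrow> (case j of Inl b \<Rightarrow> M21 $ a $ b | Inr b \<Rightarrow> M22 $ a $ b))"

definition hamiltonian :: "real^'n^'n \<Rightarrow> real^'n^'n \<Rightarrow> real^'n^'n \<Rightarrow> real^('n+'n)^('n+'n)" where
  "hamiltonian A Q D = block_mat A (- D) (- Q) (- transpose A)"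

definition Jmat :: "real^('n::finite+'n)^('n+'n)" where
  "Jmat = block_mat 0 (mat 1) (- mat 1) 0"

definition outer :: "real^'m \<Rightarrow> real^'n \<Rightarrow> real^'n^'m" where
  "outer v w = (\<chi> i j. v $ i * w $ j)"

end

theory Submission
  imports Defs "HOL-Computational_Algebra.Fundamental_Theorem_Algebra"
begin


section \<open>Generic matrix algebra\<close>

lemma mm_add_rdistrib: "((A::'a::comm_ring_1^'n^'m) + B) ** C = A ** C + B ** C"
  by (simp add: matrix_matrix_mult_def vec_eq_iff sum.distrib distrib_right)

lemma mm_diff_rdistrib: "((A::'a::comm_ring_1^'n^'m) - B) ** C = A ** C - B ** C"
  by (simp add: matrix_matrix_mult_def vec_eq_iff sum_subtractf left_diff_distrib)

lemma mm_diff_ldistrib: "(A::'a::comm_ring_1^'n^'m) ** (B - C) = A ** B - A ** C"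
  by (simp add: matrix_matrix_mult_def vec_eq_iff sum_subtractf right_diff_distrib)

lemma mm_neg_l: "(- (A::'a::comm_ring_1^'n^'m)) ** B = - (A ** B)"
  by (simp add: matrix_matrix_mult_def vec_eq_iff sum_negf)

lemma mm_neg_r: "(A::'a::comm_ring_1^'n^'m) ** (- B) = - (A ** B)"
  by (simp add: matrix_matrix_mult_def vec_eq_iff sum_negf)

lemma transpose_add: "transpose ((A::'a::comm_ring_1^'n^'m) + B) = transpose A + transpose B"
  by (simp add: transpose_def vec_eq_iff)

lemma transpose_diff: "transpose ((A::'a::comm_ring_1^'n^'m) - B) = transpose A - transpose B"
  by (simp add: transpose_def vec_eq_iff)

lemma transpose_neg: "transpose (- (A::'a::comm_ring_1^'n^'m)) = - transpose A"
  by (simp add: transpose_def vec_eq_iff)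

lemma transpose_zero: "transpose (0::'a::comm_ring_1^'n^'m) = 0"
  by (simp add: transpose_def vec_eq_iff)

lemma mat_mult_entry: "mat c ** (M::'a::comm_ring_1^'n^'m) = (\<chi> i j. c * M$i$j)"
  by (simp add: matrix_matrix_mult_def mat_def vec_eq_iff if_distrib if_distribR sum.delta cong: if_cong)

lemma mult_mat_entry: "(M::'a::comm_ring_1^'n^'m) ** mat c = (\<chi> i j. c * M$i$j)"
  by (simp add: matrix_matrix_mult_def mat_def vec_eq_iff if_distrib if_distribR sum.delta' mult.commute cong: if_cong)

lemma mat_comm: "mat c ** (M::'a::comm_ring_1^'n^'n) = M ** mat c"
  by (simp add: mat_mult_entry mult_mat_entry)

lemma mat_add: "mat (a + b) = (mat a + mat b :: 'a::comm_ring_1^'n^'n)"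
  by (simp add: mat_def vec_eq_iff)

lemma mat_mult: "mat (a * b) = (mat a ** mat b :: 'a::comm_ring_1^'n^'n)"
  by (simp add: mat_mult_entry) (simp add: mat_def vec_eq_iff)

lemma mat_neg: "mat (- a) = (- mat a :: 'a::comm_ring_1^'n^'n)"
  by (simp add: mat_def vec_eq_iff)

lemma mat_mv: "mat c *v (x::'a::comm_ring_1^'n) = c *s x"
  by (simp add: matrix_vector_mult_def mat_def vec_eq_iff if_distrib if_distribR sum.delta cong: if_cong)

lemma invertible_ker:
  fixes M :: "'a::field^'n^'n"
  shows "invertible M \<longleftrightarrow> (\<forall>x. M *v x = 0 \<longrightarrow> x = 0)"
  by (simp add: invertible_left_inverse matrix_left_invertible_ker)

lemma invertible_transpose_iff:
  fixes M :: "'a::field^'n^'n"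
  shows "invertible (transpose M) \<longleftrightarrow> invertible M"
  by (metis invertible_left_inverse invertible_right_inverse left_invertible_transpose)

lemma invertible_neg:
  fixes M :: "'a::field^'n^'n"
  assumes "invertible M" shows "invertible (- M)"
proof -
  obtain B where "M ** B = mat 1" "B ** M = mat 1" using assms invertible_def by blast
  then show ?thesis unfolding invertible_def
    by (intro exI[of _ "- B"]) (simp add: mm_neg_l mm_neg_r)
qed



lemma mat_comm_assoc: "(K::'a::comm_ring_1^'n^'n) ** (mat c ** M) = mat c ** (K ** M)"
  by (metis mat_comm matrix_mul_assoc)

definition mev :: "complex poly \<Rightarrow> complex^'n^'n \<Rightarrow> complex^'n^'n" where
  "mev p K = fold_coeffs (\<lambda>a M. mat a + K ** M) p 0"

lemma mev_0[simp]: "mev 0 K = 0"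
  by (simp add: mev_def)

lemma mev_pCons: "mev (pCons a p) K = mat a + K ** mev p K"
proof (cases "a = 0 \<and> p = 0")
  case True then show ?thesis by (simp add: mev_def)
next
  case False then show ?thesis by (auto simp add: mev_def)
qed

lemma mev_add: "mev (p + q) K = mev p K + mev q K"
proof (induction p arbitrary: q rule: pCons_induct)
  case 0 then show ?case by simp
next
  case (pCons a p)
  show ?case
  proof (cases q rule: pCons_cases)
    case (pCons b q')
    show ?thesis using pCons.IH[of q'] unfolding pCons
      by (simp add: mev_pCons mat_add matrix_add_ldistrib algebra_simps)
  qed
qed

lemma mev_smult: "mev (smult c p) K = mat c ** mev p K"
proof (induction p rule: pCons_induct)
  case 0 then show ?case by simp
next
  case (pCons a p)
  then show ?case
    by (simp add: mev_pCons mat_mult matrix_add_ldistrib mat_comm_assoc)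
qed

lemma mev_mult: "mev (p * q) K = mev p K ** mev q K"
proof (induction p rule: pCons_induct)
  case 0 then show ?case by simp
next
  case (pCons a p)
  then show ?case
    by (simp add: mev_pCons mev_add mev_smult mm_add_rdistrib matrix_mul_assoc)
qed

lemma mev_uminus: "mev (- p) K = - mev p K"
  using mev_smult[of "-1" p K] by (simp add: mat_neg mm_neg_l)

lemma mev_diff: "mev (p - q) K = mev p K - mev q K"
  using mev_add[of p "-q" K] by (simp add: mev_uminus)

lemma mev_sum: "mev (\<Sum>i\<in>S. f i) K = (\<Sum>i\<in>S. mev (f i) K)"
  by (induction S rule: infinite_finite_induct) (auto simp: mev_add)

lemma mev_const: "mev [:c:] K = mat c"
  by (simp add: mev_pCons)

lemma mev_lin: "mev [:-mu, 1:] K = K - mat mu"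
  by (simp add: mev_pCons mat_neg)

lemma mat_ofreal: "mat (complex_of_real r) ** M = r *\<^sub>R (M::complex^'n^'n)"
  by (simp add: mat_mult_entry vec_eq_iff) (simp add: scaleR_conv_of_real)

lemma mev_monom: "mev (monom c i) K = mat c ** mev (monom 1 i) K"
  using mev_smult[of c "monom 1 i" K] by (simp add: smult_monom)

lemma annih: "\<exists>p. p \<noteq> 0 \<and> mev p (K::complex^'n^'n) = 0"
proof -
  define pw where "pw i = mev (monom 1 i) K" for i
  define m where "m = DIM(complex^'n^'n)"
  show ?thesis
  proof (cases "inj_on pw {..m}")
    case False
    then obtain i j where ij: "i \<le> m" "j \<le> m" "i \<noteq> j" "pw i = pw j"
      unfolding inj_on_def by auto
    let ?p = "monom (1::complex) i - monom 1 j"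
    have "coeff ?p i = 1" using ij by simp
    then have "?p \<noteq> 0" by (metis coeff_0 zero_neq_one)
    moreover have "mev ?p K = 0" using ij by (simp add: mev_diff pw_def)
    ultimately show ?thesis by blast
  next
    case True
    let ?S = "pw ` {..m}"
    have fin: "finite ?S" by simp
    have "card ?S = m + 1" using True by (simp add: card_image)
    then have "dependent ?S" by (intro dependent_biggerset) (simp add: m_def)
    then obtain u where u: "\<exists>v\<in>?S. u v \<noteq> 0" "(\<Sum>v\<in>?S. u v *\<^sub>R v) = 0"
      using real_vector.dependent_finite[OF fin] by blast
    define p where "p = (\<Sum>i\<le>m. monom (complex_of_real (u (pw i))) i)"
    have cp: "coeff p i = complex_of_real (u (pw i))" if "i \<le> m" for i
      using that unfolding p_def by (simp add: coeff_sum)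
    from u(1) obtain i where i: "i \<le> m" "u (pw i) \<noteq> 0" by blast
    then have "p \<noteq> 0" using cp[OF i(1)] by auto
    moreover have "mev p K = (\<Sum>i\<le>m. u (pw i) *\<^sub>R pw i)"
    proof -
      have mm: "mev (monom (complex_of_real r) i) K = r *\<^sub>R pw i" for r i
        unfolding pw_def by (metis mev_monom mat_ofreal)
      show ?thesis unfolding p_def mev_sum mm ..
    qed
    moreover have "(\<Sum>i\<le>m. u (pw i) *\<^sub>R pw i) = (\<Sum>v\<in>?S. u v *\<^sub>R v)"
      using sum.reindex[OF True, of "\<lambda>v. u v *\<^sub>R v"] by simp
    ultimately show ?thesis using u(2) by auto
  qed
qed

lemma sylvester_c:
  fixes N K Z :: "complex^'n^'n"
  assumes NZ: "N ** Z = Z ** K"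
    and inv: "\<And>mu. invertible (K - mat mu) \<or> invertible (N - mat mu)"
  shows "Z = 0"
proof -
  have main: "\<forall>p. degree p = d \<longrightarrow> p \<noteq> 0 \<longrightarrow> Z ** mev p K = 0 \<longrightarrow> Z = 0" for d
  proof (induction d rule: less_induct)
    case (less d)
    show ?case
    proof (intro allI impI)
      fix p :: "complex poly"
      assume dp: "degree p = d" and p0: "p \<noteq> 0" and Zp: "Z ** mev p K = 0"
      show "Z = 0"
      proof (cases "d = 0")
        case True
        then have pc: "p = [:coeff p 0:]" using dp by (metis degree_0_id)
        then have c0: "coeff p 0 \<noteq> 0" using p0 by (metis pCons_0_0)
        have "Z ** mat (coeff p 0) = 0" using Zp pc mev_const by metis
        then have "(Z ** mat (coeff p 0)) ** mat (inverse (coeff p 0)) = 0" by simp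
        then show "Z = 0" using c0
          by (simp add: matrix_mul_assoc[symmetric] mat_mult[symmetric])
      next
        case False
        then have "\<not> constant (poly p)" using dp constant_degree by (simp add: constant_degree)
        then obtain mu where "poly p mu = 0" using fundamental_theorem_of_algebra by blast
        then obtain r where pr: "p = [:-mu, 1:] * r" using poly_eq_0_iff_dvd by (metis dvdE)
        have r0: "r \<noteq> 0" using p0 pr by auto
        have "degree p = degree [:-mu, 1::complex:] + degree r" unfolding pr
          by (rule degree_mult_eq) (use r0 in auto)
        then have "degree p = degree r + 1" by simp
        then have dr: "degree r < d" using dp by simp
        have ev1: "mev p K = (K - mat mu) ** mev r K" unfolding pr mev_mult mev_lin ..
        have ev2: "mev p K = mev r K ** (K - mat mu)" 
          unfolding pr mult.commute[of "[:-mu, 1:]"] mev_mult mev_lin ..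
        define W where "W = Z ** mev r K"
        have W1: "W ** (K - mat mu) = 0" using Zp ev2 W_def by (simp add: matrix_mul_assoc)
        have "(N - mat mu) ** Z = Z ** (K - mat mu)"
          using NZ by (simp add: mm_diff_rdistrib mm_diff_ldistrib mat_comm)
        then have W2: "(N - mat mu) ** W = 0" using Zp ev1 W_def by (simp add: matrix_mul_assoc)
        have "W = 0"
        proof (cases "invertible (K - mat mu)")
          case True
          then obtain B where "(K - mat mu) ** B = mat 1" using invertible_def by blast
          then have "W = (W ** (K - mat mu)) ** B" by (simp add: matrix_mul_assoc[symmetric])
          then show ?thesis using W1 by simp
        next
          case False
          then have "invertible (N - mat mu)" using inv by blast
          then obtain B where "B ** (N - mat mu) = mat 1" using invertible_def by blast
          then have "W = B ** ((N - mat mu) ** W)" by (simp add: matrix_mul_assoc)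
          then show ?thesis using W2 by simp
        qed
        then have "Z ** mev r K = 0" using W_def by simp
        then show "Z = 0" by (rule less.IH[OF dr, rule_format, OF refl r0])
      qed
    qed
  qed
  obtain p where "p \<noteq> 0" "mev p K = 0" using annih by blast
  then show ?thesis using main by simp
qed



definition cv :: "real^'n \<Rightarrow> complex^'n" where
  "cv u = (\<chi> i. complex_of_real (u$i))"

lemma cmat_mult: "cmat (A ** B) = cmat A ** cmat B"
  by (simp add: cmat_def matrix_matrix_mult_def vec_eq_iff)

lemma cmat_add: "cmat (A + B) = cmat A + cmat B"
  by (simp add: cmat_def vec_eq_iff)

lemma cmat_diff: "cmat (A - B) = cmat A - cmat B"
  by (simp add: cmat_def vec_eq_iff)

lemma cmat_neg: "cmat (- A) = - cmat A"
  by (simp add: cmat_def vec_eq_iff)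

lemma cmat_transpose: "cmat (transpose A) = transpose (cmat A)"
  by (simp add: cmat_def transpose_def vec_eq_iff)

lemma cmat_scaleR: "cmat (c *\<^sub>R A) = c *\<^sub>R cmat A"
  by (simp add: cmat_def vec_eq_iff) (simp add: scaleR_conv_of_real)

lemma cmat_eq0: "cmat A = 0 \<Longrightarrow> A = 0"
  by (simp add: cmat_def vec_eq_iff)

lemma cmat_mv: "cmat M *v cv u = cv (M *v u)"
  by (simp add: cmat_def cv_def matrix_vector_mult_def vec_eq_iff)

lemma cv_eq0: "cv u = 0 \<longleftrightarrow> u = 0"
  by (simp add: cv_def vec_eq_iff)

lemma cv_scaleR: "cv (c *\<^sub>R u) = complex_of_real c *s cv u"
  by (simp add: cv_def vec_eq_iff)

lemma hurwitz_inv: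
  assumes "hurwitz F" "0 \<le> Re mu"
  shows "invertible (cmat F - mat mu) \<and> invertible (transpose (cmat F) - mat mu)"
proof -
  have i1: "invertible (cmat F - mat mu)"
    unfolding invertible_ker
  proof (intro allI impI)
    fix x assume "(cmat F - mat mu) *v x = 0"
    then have "cmat F *v x = mu *s x"
      by (simp add: matrix_vector_mult_diff_rdistrib mat_mv)
    then show "x = 0" using assms unfolding hurwitz_def by force
  qed
  moreover have "transpose (cmat F) - mat mu = transpose (cmat F - mat mu)"
    by (simp add: transpose_diff)
  ultimately show ?thesis by (simp add: invertible_transpose_iff)
qed

lemma sylvester_real:
  fixes F G Z :: "real^'n^'n"
  assumes "hurwitz F" "hurwitz G" "(- transpose G) ** Z = Z ** F"
  shows "Z = 0"
proof -
  have "(- transpose (cmat G)) ** cmat Z = cmat Z ** cmat F"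
    using arg_cong[OF assms(3), of cmat] by (simp add: cmat_mult cmat_neg cmat_transpose)
  moreover have "invertible (cmat F - mat mu) \<or> invertible (- transpose (cmat G) - mat mu)" for mu
  proof (cases "0 \<le> Re mu")
    case True then show ?thesis using hurwitz_inv[OF assms(1)] by blast
  next
    case False
    then have "invertible (transpose (cmat G) - mat (- mu))" using hurwitz_inv[OF assms(2), of "-mu"] by simp
    then have "invertible (- (transpose (cmat G) - mat (- mu)))" by (rule invertible_neg)
    moreover have "- (transpose (cmat G) - mat (- mu)) = - transpose (cmat G) - mat mu"
      by (simp add: mat_neg)
    ultimately show ?thesis by metis
  qed
  ultimately have "cmat Z = 0"
    using sylvester_c[where N="- transpose (cmat G)" and K="cmat F" and Z="cmat Z"] by blast
  then show ?thesis by (rule cmat_eq0)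
qed

lemmas mdist = mm_add_rdistrib mm_diff_rdistrib matrix_add_ldistrib mm_diff_ldistrib
  mm_neg_l mm_neg_r matrix_transpose_mul transpose_add transpose_diff transpose_neg matrix_mul_assoc

lemma stab_sym:
  fixes A Q D X :: "real^'n^'n"
  assumes sQ: "symmetric_mat Q" and sD: "symmetric_mat D" and st: "stabilizing_solution A Q D X"
  shows "transpose X = X"
proof -
  define F where "F = A - D ** X"
  define Z where "Z = X - transpose X"
  define R where "R = are_residual A Q D X"
  have R0: "R = 0" using st by (simp add: stabilizing_solution_def R_def)
  have tQ: "transpose Q = Q" and tD: "transpose D = D" using sQ sD by (auto simp: symmetric_mat_def)
  have "transpose F ** Z + Z ** F = R - transpose R"
    unfolding F_def Z_def R_def are_residual_def
    by (simp add: mdist tQ tD algebra_simps)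
  then have "transpose F ** Z + Z ** F = 0" using R0 by (simp add: transpose_zero)
  then have "(- transpose F) ** Z = Z ** F"
    by (metis mm_neg_l eq_neg_iff_add_eq_0 add.commute)
  then have "Z = 0" using sylvester_real[of F F Z] st by (simp add: stabilizing_solution_def F_def)
  then show ?thesis by (simp add: Z_def)
qed

lemma stab_unique:
  fixes A Q D X Y :: "real^'n^'n"
  assumes sQ: "symmetric_mat Q" and sD: "symmetric_mat D"
    and stX: "stabilizing_solution A Q D X" and stY: "stabilizing_solution A Q D Y"
  shows "X = Y"
proof -
  have tY: "transpose Y = Y" using stab_sym[OF sQ sD stY] .
  have tD: "transpose D = D" using sD by (auto simp: symmetric_mat_def)
  define F where "F = A - D ** X"
  define G where "G = A - D ** Y"
  define Z where "Z = X - Y"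
  have "transpose G ** Z + Z ** F = are_residual A Q D X - are_residual A Q D Y"
    unfolding F_def G_def Z_def are_residual_def
    by (simp add: mdist tY tD algebra_simps)
  then have "transpose G ** Z + Z ** F = 0" using stX stY
    by (simp add: stabilizing_solution_def)
  then have "(- transpose G) ** Z = Z ** F"
    by (metis mm_neg_l eq_neg_iff_add_eq_0 add.commute)
  then have "Z = 0" using sylvester_real[of F G Z] stX stY by (simp add: stabilizing_solution_def F_def G_def)
  then show ?thesis by (simp add: Z_def)
qed



lemma sum_UNIV_Plus: "(\<Sum>j\<in>(UNIV::('a::finite+'b::finite) set). f j) = (\<Sum>a\<in>UNIV. f (Inl a)) + (\<Sum>b\<in>UNIV. f (Inr b))"
  using sum.Plus[of "UNIV::'a set" "UNIV::'b set" f] by (simp add: comp_def)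

lemma outer_mm_r: "outer a b ** (M::real^'n^'n) = outer a (transpose M *v b)"
  by (simp add: outer_def matrix_matrix_mult_def matrix_vector_mult_def transpose_def vec_eq_iff
      sum_distrib_left mult_ac)

lemma outer_mm_l: "(M::real^'n^'n) ** outer a b = outer (M *v a) b"
  by (simp add: outer_def matrix_matrix_mult_def matrix_vector_mult_def vec_eq_iff
      sum_distrib_left sum_distrib_right mult_ac)

lemma transpose_outer: "transpose (outer a b) = outer b a"
  by (simp add: outer_def transpose_def vec_eq_iff mult_ac)

lemma outer_add_r: "outer a (b + c) = outer a b + outer a c"
  by (simp add: outer_def vec_eq_iff algebra_simps)

lemma outer_add_l: "outer (a + b) c = outer a c + outer b c"
  by (simp add: outer_def vec_eq_iff algebra_simps)

lemma mv_smult: "(M::'a::comm_ring_1^'n^'m) *v (c *s z) = c *s (M *v z)"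
  by (simp add: matrix_vector_mult_def vec_eq_iff sum_distrib_left mult_ac)

lemma inner_mv: "((M::real^'n^'n) *v a) \<bullet> b = a \<bullet> (transpose M *v b)"
  by (metis dot_lmul_matrix vector_transpose_matrix)

lemma brauer:
  fixes F :: "real^'n^'n" and x w :: "real^'n"
  assumes hF: "hurwitz F" and Fx: "F *v x = lam *\<^sub>R x" and wx: "w \<bullet> x = 1"
    and lam: "lam < 0" and ld: "lam + dlam < 0"
  shows "hurwitz (F + dlam *\<^sub>R outer x w)"
  unfolding hurwitz_def
proof (intro allI impI, elim conjE)
  fix l :: complex and z :: "complex^'n"
  assume z0: "z \<noteq> 0" and ev: "cmat (F + dlam *\<^sub>R outer x w) *v z = l *s z"
  define s where "s = (\<Sum>j\<in>UNIV. complex_of_real (w$j) * z$j)"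
  define cx where "cx = cv x"
  have Fcx: "cmat F *v cx = complex_of_real lam *s cx"
    unfolding cx_def by (simp add: cmat_mv Fx cv_scaleR)
  have evc: "(cmat F *v z) $ i = l * z $ i - complex_of_real dlam * s * cx $ i" for i
  proof -
    have "(cmat (F + dlam *\<^sub>R outer x w) *v z) $ i
        = (cmat F *v z) $ i + complex_of_real dlam * s * cx $ i"
      by (simp add: cmat_def matrix_vector_mult_def outer_def s_def cx_def cv_def sum.distrib
          sum_distrib_left algebra_simps)
    then show ?thesis using ev by (simp add: vec_eq_iff)
  qed
  show "Re l < 0"
  proof (cases "l = complex_of_real (lam + dlam) \<or> l = complex_of_real lam")
    case True then show ?thesis using lam ld by auto
  next
    case False
    then have ll: "l - complex_of_real lam \<noteq> 0" by auto
    define al where "al = complex_of_real dlam * s / (l - complex_of_real lam)"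
    have alq: "al * (l - complex_of_real lam) = complex_of_real dlam * s"
      unfolding al_def using ll by simp
    define z' where "z' = z - al *s cx"
    have "cmat F *v z' = l *s z'"
    proof -
      have "(cmat F *v z') $ i = (l *s z') $ i" for i
      proof -
        have "(cmat F *v z') $ i = (cmat F *v z) $ i - al * (complex_of_real lam * cx $ i)"
          unfolding z'_def by (simp add: matrix_vector_mult_diff_distrib mv_smult Fcx)
        also have "\<dots> = l * z $ i - complex_of_real dlam * s * cx $ i - al * (complex_of_real lam * cx $ i)"
          using evc by simp
        also have "\<dots> = l * (z $ i - al * cx $ i)"
          unfolding alq[symmetric] by (simp add: algebra_simps)
        finally show ?thesis by (simp add: z'_def algebra_simps)
      qed
      then show ?thesis by (simp add: vec_eq_iff)
    qed
    show ?thesis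
    proof (cases "z' = 0")
      case False
      then show ?thesis using hF \<open>cmat F *v z' = l *s z'\<close> unfolding hurwitz_def by blast
    next
      case True
      then have zal: "z = al *s cx" unfolding z'_def by simp
      have "s = al * complex_of_real (w \<bullet> x)"
        unfolding s_def zal cx_def cv_def inner_vec_def
        by (simp add: sum_distrib_left of_real_sum algebra_simps)
      then have sal: "s = al" using wx by simp
      obtain i where "z $ i \<noteq> 0" using z0 by (metis vec_eq_iff zero_index)
      then have ai: "al \<noteq> 0" "cx $ i \<noteq> 0" using zal by auto
      have "(cmat F *v z) $ i = al * (complex_of_real lam * cx $ i)"
        using zal by (simp add: mv_smult Fcx)
      then have "al * (complex_of_real lam * cx $ i) = l * (al * cx $ i) - complex_of_real dlam * al * cx $ i"
        using evc[of i] zal sal by simp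
      then have "al * cx $ i * (complex_of_real lam + complex_of_real dlam - l) = 0"
        by (simp add: algebra_simps)
      then have "l = complex_of_real (lam + dlam)" using ai by simp
      then show ?thesis using False by blast
    qed
  qed
qed



lemma mm_scaleR_r: "(A::real^'n^'m) ** (k *\<^sub>R B) = k *\<^sub>R (A ** B)"
  by (simp add: matrix_scalar_ac scalar_matrix_assoc)

theorem theorem1:
  fixes A Q D P :: "real^'n^'n" and lam :: real and v :: "real^('n+'n)"
  assumes "symmetric_mat Q" and "symmetric_mat D"
    and "stabilizable A D" and "detectable Q A"
    and "stabilizing_solution A Q D P"
    and "hamiltonian A Q D *v v = lam *s v" and "lam < 0" and "norm v = 1"
  shows "\<forall>dlam::real. \<exists>At Qt Dt :: real^'n^'n.
           symmetric_mat Qt \<and> symmetric_mat Dt \<and>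
           hamiltonian A Q D
             + dlam *\<^sub>R (outer v ((Jmat + mat 1) *v v) - outer (Jmat *v v) (Jmat *v v))
             = hamiltonian At Qt Dt \<and>
           (dlam < - lam \<longrightarrow>
              stabilizing_solution At Qt Dt P \<and>
              (\<forall>X. stabilizing_solution At Qt Dt X \<longrightarrow> X = P))"
proof
  fix dlam :: real
  note sQ = assms(1) and sD = assms(2) and stP = assms(5) and Hv = assms(6)
    and lam = assms(7) and nv = assms(8)
  have tQ: "transpose Q = Q" and tD: "transpose D = D" using sQ sD by (auto simp: symmetric_mat_def)
  have tP: "transpose P = P" using stab_sym[OF sQ sD stP] .
  define x where "x = (\<chi> a. v $ Inl a)"
  define y where "y = (\<chi> a. v $ Inr a)"
  have vx: "v $ Inl a = x $ a" and vy: "v $ Inr a = y $ a" for a by (simp_all add: x_def y_def)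
  have Hl: "(hamiltonian A Q D *v v) $ Inl a = (A *v x - D *v y) $ a" for a
    by (simp add: hamiltonian_def block_mat_def matrix_vector_mult_def sum_UNIV_Plus vx vy
        sum_subtractf sum_negf)
  have Hr: "(hamiltonian A Q D *v v) $ Inr a = (- (Q *v x) - transpose A *v y) $ a" for a
    by (simp add: hamiltonian_def block_mat_def matrix_vector_mult_def sum_UNIV_Plus vx vy
        transpose_def sum_negf)
  have eq1: "A *v x - D *v y = lam *\<^sub>R x"
    using Hl Hv by (simp add: vec_eq_iff vx)
  have eq2: "- (Q *v x) - transpose A *v y = lam *\<^sub>R y"
    using Hr Hv by (simp add: vec_eq_iff vy)
  have nxy: "x \<bullet> x + y \<bullet> y = 1"
  proof -
    have "v \<bullet> v = 1" using nv by (metis norm_eq_1)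
    then show ?thesis by (simp add: inner_vec_def sum_UNIV_Plus vx vy)
  qed
  define F where "F = A - D ** P"
  have hF: "hurwitz F" using stP by (simp add: stabilizing_solution_def F_def)
  have R0: "transpose A ** P + P ** A + Q - P ** D ** P = 0"
    using stP by (simp add: stabilizing_solution_def are_residual_def)
  have ARx: "transpose A *v (P *v x) = P *v (D *v (P *v x)) - P *v (A *v x) - Q *v x"
  proof -
    have "(transpose A ** P + P ** A + Q - P ** D ** P) *v x = 0" using R0 by simp
    then show ?thesis
      by (simp add: matrix_vector_mult_add_rdistrib matrix_vector_mult_diff_rdistrib
          matrix_vector_mul_assoc[symmetric] algebra_simps)
  qed
  \<comment> \<open>the eigenvector lies in the graph of P\<close>
  define u where "u = y - P *v x"
  have Ftu: "transpose F *v u = (- lam) *\<^sub>R u"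
  proof -
    have tF: "transpose F = transpose A - P ** D"
      unfolding F_def by (simp add: transpose_diff matrix_transpose_mul tP tD)
    have "transpose F *v u = transpose A *v y - transpose A *v (P *v x) - P *v (D *v y) + P *v (D *v (P *v x))"
      unfolding tF u_def
      by (simp add: matrix_vector_mult_diff_rdistrib matrix_vector_mult_diff_distrib
          matrix_vector_mul_assoc[symmetric] algebra_simps)
    also have "P *v (D *v y) = P *v (A *v x) - lam *\<^sub>R (P *v x)"
    proof -
      have "D *v y = A *v x - lam *\<^sub>R x" using eq1 by (simp add: algebra_simps)
      then show ?thesis by (simp add: matrix_vector_mult_diff_distrib matrix_vector_mult_scaleR)
    qed
    also have "transpose A *v y = - (Q *v x) - lam *\<^sub>R y" using eq2 by (simp add: algebra_simps)
    finally show ?thesis unfolding ARx u_def by (simp add: algebra_simps)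
  qed
  have u0: "u = 0"
  proof (rule ccontr)
    assume "u \<noteq> 0"
    have "(transpose (cmat F) - mat (complex_of_real (- lam))) *v cv u = 0"
    proof -
      have e: "transpose (cmat F) *v cv u = complex_of_real (- lam) *s cv u"
        using cmat_mv[of "transpose F" u] Ftu cv_scaleR cmat_transpose by metis
      show ?thesis
        by (simp add: matrix_vector_mult_diff_rdistrib mat_mv e del: transpose_matrix_vector)
    qed
    moreover have "invertible (transpose (cmat F) - mat (complex_of_real (- lam)))"
      using hurwitz_inv[OF hF, of "complex_of_real (- lam)"] lam by simp
    ultimately have "cv u = 0" using invertible_ker by blast
    then show False using \<open>u \<noteq> 0\<close> cv_eq0 by blast
  qed
  have yPx: "P *v x = y" using u0 u_def by simp
  have Fx: "F *v x = lam *\<^sub>R x"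
    unfolding F_def using eq1 yPx
    by (simp add: matrix_vector_mult_diff_rdistrib matrix_vector_mul_assoc[symmetric])
  define w where "w = x + P *v y"
  have wx: "w \<bullet> x = 1"
  proof -
    have "(P *v y) \<bullet> x = y \<bullet> y" by (simp add: inner_mv tP yPx)
    then show ?thesis using nxy by (simp add: w_def inner_add_left)
  qed
  define At where "At = A + dlam *\<^sub>R (outer x x + outer x y - outer y y)"
  define Dt where "Dt = D - dlam *\<^sub>R (outer x y + outer y x - outer x x)"
  define Qt where "Qt = Q - dlam *\<^sub>R (outer y y + outer y x + outer x y)"
  have sQt: "symmetric_mat Qt"
    unfolding symmetric_mat_def Qt_def
    by (simp add: transpose_diff transpose_add transpose_scalar transpose_outer tQ algebra_simps)
  have sDt: "symmetric_mat Dt"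
    unfolding symmetric_mat_def Dt_def
    by (simp add: transpose_diff transpose_add transpose_scalar transpose_outer tD algebra_simps)
  have blk: "hamiltonian A Q D
             + dlam *\<^sub>R (outer v ((Jmat + mat 1) *v v) - outer (Jmat *v v) (Jmat *v v))
             = hamiltonian At Qt Dt"
  proof -
    have Jv: "Jmat *v v = (\<chi> i. case i of Inl a \<Rightarrow> y $ a | Inr a \<Rightarrow> - x $ a)"
    proof -
      have "(Jmat *v v) $ i = (case i of Inl a \<Rightarrow> y $ a | Inr a \<Rightarrow> - x $ a)" for i
        by (cases i) (simp_all add: Jmat_def block_mat_def matrix_vector_mult_def sum_UNIV_Plus
            mat_def vx vy if_distrib if_distribR sum.delta cong: if_cong)
      then show ?thesis by (simp add: vec_eq_iff)
    qed
    have Jv1: "(Jmat + mat 1) *v v = Jmat *v v + v"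
      by (simp add: matrix_vector_mult_add_rdistrib)
    show ?thesis
    proof (subst vec_eq_iff, intro allI, subst vec_eq_iff, intro allI)
      fix i j :: "'n + 'n"
      show "(hamiltonian A Q D
             + dlam *\<^sub>R (outer v ((Jmat + mat 1) *v v) - outer (Jmat *v v) (Jmat *v v))) $ i $ j
             = hamiltonian At Qt Dt $ i $ j"
        unfolding Jv1 Jv
        by (cases i; cases j) (simp_all add: hamiltonian_def block_mat_def outer_def At_def Qt_def Dt_def
            transpose_def vx vy algebra_simps)
    qed
  qed
  show "\<exists>At Qt Dt :: real^'n^'n.
           symmetric_mat Qt \<and> symmetric_mat Dt \<and>
           hamiltonian A Q D
             + dlam *\<^sub>R (outer v ((Jmat + mat 1) *v v) - outer (Jmat *v v) (Jmat *v v))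
             = hamiltonian At Qt Dt \<and>
           (dlam < - lam \<longrightarrow>
              stabilizing_solution At Qt Dt P \<and>
              (\<forall>X. stabilizing_solution At Qt Dt X \<longrightarrow> X = P))"
  proof (intro exI conjI impI allI)
    show "symmetric_mat Qt" "symmetric_mat Dt" by (fact sQt, fact sDt)
    show "hamiltonian A Q D
             + dlam *\<^sub>R (outer v ((Jmat + mat 1) *v v) - outer (Jmat *v v) (Jmat *v v))
             = hamiltonian At Qt Dt" by (fact blk)
    assume dl: "dlam < - lam"
    have closed: "At - Dt ** P = F + dlam *\<^sub>R outer x w"
      unfolding At_def Dt_def F_def w_def
      by (simp add: mdist scalar_matrix_assoc[symmetric] outer_mm_r tP yPx outer_add_r
          algebra_simps del: transpose_matrix_vector)
    have "are_residual At Qt Dt P = are_residual A Q D P"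
      unfolding At_def Dt_def Qt_def are_residual_def
      by (simp add: mdist transpose_scalar transpose_outer mm_scaleR_r scalar_matrix_assoc[symmetric]
          outer_mm_r outer_mm_l tP yPx outer_add_r outer_add_l algebra_simps del: transpose_matrix_vector)
    then have res: "are_residual At Qt Dt P = 0"
      using stP by (simp add: stabilizing_solution_def)
    have "hurwitz (At - Dt ** P)"
      unfolding closed by (rule brauer[OF hF Fx wx lam]) (use dl in simp)
    then show stP': "stabilizing_solution At Qt Dt P"
      using res by (simp add: stabilizing_solution_def)
    fix X assume "stabilizing_solution At Qt Dt X"
    then show "X = P" using stab_unique[OF sQt sDt _ stP'] by blast
  qed
qed


end
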